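(* Let $G$ be a connected graph with no Hamiltonian path, and let $T$ be a spanning tree of $G$ satisfying (C1) and (C2). Let $b,r\in B(T)$ be such that $V(P_T[b,r])\cap B(T)=\{b,r\}$, orient $P_T[b,r]$ from $b$ to $r$, and let $s\in L(T)$. If $sx\in E(G)$ for some $x\in V(P_T[b,r])\setminus\{b\}$, then $sx^-\notin E(G)$, where $x^-$ is the predecessor of $x$ on $P_T[b,r]$.
   Context: All graphs are finite and simple. For a tree $T$, $L(T)$ is the set of leaves (degree-one vertices) and $B(T)$ the set of branch vertices (degree at least three); $P_T[u,v]$ is the unique path in $T$ between $u$ and $v$. Since $G$ has no Hamiltonian path, every spanning tree of $G$ has a branch vertex. Reducible stem: for a tree $T$ with $B(T)\neq\emptyset$ and each leaf $x\in L(T)$, let $y_x\in B(T)$ be the branch vertex such that the path $P_T[x,y_x]$ contains no branch vertex other than $y_x$; deleting $V(P_T[x,y_x])\setminus\{y_x\}$ from $T$ for all $x\in L(T)$ yields a subtree $R\_Stem(T)$. Condition (C1): $|L(T)|$ is minimum among all spanning trees of $G$. Condition (C2): subject to (C1), $|V(R\_Stem(T))|$ is maximum. *)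

theory Defs
  imports Main
begin

definition simple_graph :: "'a set \<Rightarrow> 'a set set \<Rightarrow> bool" where
  "simple_graph V E \<longleftrightarrow> finite V \<and>
     (\<forall>e\<in>E. \<exists>u v. e = {u, v} \<and> u \<noteq> v \<and> u \<in> V \<and> v \<in> V)"

definition is_path :: "'a set set \<Rightarrow> 'a list \<Rightarrow> bool" where
  "is_path E p \<longleftrightarrow> p \<noteq> [] \<and> distinct p \<and>
     (\<forall>i. Suc i < length p \<longrightarrow> {p ! i, p ! Suc i} \<in> E)"

definition connected_graph :: "'a set \<Rightarrow> 'a set set \<Rightarrow> bool" where
  "connected_graph V E \<longleftrightarrow>
     (\<forall>u\<in>V. \<forall>v\<in>V. \<exists>p. is_path E p \<and> hd p = u \<and> last p = v)"

definition hamiltonian_path :: "'a set \<Rightarrow> 'a set set \<Rightarrow> bool" where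
  "hamiltonian_path V E \<longleftrightarrow> (\<exists>p. is_path E p \<and> set p = V)"

definition is_cycle :: "'a set set \<Rightarrow> 'a list \<Rightarrow> bool" where
  "is_cycle E c \<longleftrightarrow> length c \<ge> 3 \<and> is_path E c \<and> {last c, hd c} \<in> E"

definition is_tree :: "'a set \<Rightarrow> 'a set set \<Rightarrow> bool" where
  "is_tree V F \<longleftrightarrow> simple_graph V F \<and> connected_graph V F \<and> (\<nexists>c. is_cycle F c)"

definition spanning_tree :: "'a set \<Rightarrow> 'a set set \<Rightarrow> 'a set set \<Rightarrow> bool" where
  "spanning_tree V E T \<longleftrightarrow> T \<subseteq> E \<and> is_tree V T"

definition degree :: "'a set set \<Rightarrow> 'a \<Rightarrow> nat" where
  "degree F v = card {e \<in> F. v \<in> e}"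

definition leaves :: "'a set \<Rightarrow> 'a set set \<Rightarrow> 'a set" where
  "leaves V T = {v \<in> V. degree T v = 1}"

definition branches :: "'a set \<Rightarrow> 'a set set \<Rightarrow> 'a set" where
  "branches V T = {v \<in> V. degree T v \<ge> 3}"

definition tree_path :: "'a set set \<Rightarrow> 'a \<Rightarrow> 'a \<Rightarrow> 'a list" where
  "tree_path T u v = (THE p. is_path T p \<and> hd p = u \<and> last p = v)"

definition r_stem :: "'a set \<Rightarrow> 'a set set \<Rightarrow> 'a set" where
  "r_stem V T = V - {w. \<exists>x\<in>leaves V T. \<exists>y\<in>branches V T.
       set (tree_path T x y) \<inter> branches V T = {y} \<and>
       w \<in> set (tree_path T x y) - {y}}"

definition C1 :: "'a set \<Rightarrow> 'a set set \<Rightarrow> 'a set set \<Rightarrow> bool" where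
  "C1 V E T \<longleftrightarrow> spanning_tree V E T \<and>
     (\<forall>T'. spanning_tree V E T' \<longrightarrow> card (leaves V T) \<le> card (leaves V T'))"

definition C2 :: "'a set \<Rightarrow> 'a set set \<Rightarrow> 'a set set \<Rightarrow> bool" where
  "C2 V E T \<longleftrightarrow> C1 V E T \<and>
     (\<forall>T'. C1 V E T' \<longrightarrow> card (r_stem V T') \<le> card (r_stem V T))"

end

theory Submission
  imports Defs
begin


definition adjr :: "'a set set \<Rightarrow> ('a \<times> 'a) set" where
  "adjr F = {(u,v). {u,v} \<in> F}"

definition reach :: "'a set set \<Rightarrow> 'a \<Rightarrow> 'a \<Rightarrow> bool" where
  "reach F u v \<longleftrightarrow> (u,v) \<in> (adjr F)\<^sup>*"

lemma reach_refl[simp]: "reach F u u" by (simp add: reach_def)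

lemma adjr_sym: "sym (adjr F)"
  unfolding adjr_def sym_def by (auto simp: insert_commute)

lemma reach_sym: "reach F u v \<Longrightarrow> reach F v u"
  unfolding reach_def
proof -
  assume "(u,v) \<in> (adjr F)\<^sup>*"
  moreover have "sym ((adjr F)\<^sup>*)" by (rule sym_rtrancl[OF adjr_sym])
  ultimately show "(v,u) \<in> (adjr F)\<^sup>*" by (metis symD)
qed

lemma reach_mono: "F \<subseteq> G \<Longrightarrow> reach F u v \<Longrightarrow> reach G u v"
  unfolding reach_def
proof -
  assume "F \<subseteq> G" "(u,v) \<in> (adjr F)\<^sup>*"
  moreover have "adjr F \<subseteq> adjr G" using \<open>F \<subseteq> G\<close> unfolding adjr_def by auto
  ultimately show "(u,v) \<in> (adjr G)\<^sup>*" using rtrancl_mono by blast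
qed

lemma reach_edge: "{u,v} \<in> F \<Longrightarrow> reach F u v"
  unfolding reach_def by (rule r_into_rtrancl) (simp add: adjr_def)

lemma reach_trans: "reach F u v \<Longrightarrow> reach F v w \<Longrightarrow> reach F u w"
  unfolding reach_def by (rule rtrancl_trans)

lemma path_reach: "is_path F p \<Longrightarrow> j < length p \<Longrightarrow> reach F (p!0) (p!j)"
proof (induction j)
  case 0 then show ?case by simp
next
  case (Suc j)
  then have "reach F (p!0) (p!j)" by simp
  moreover have "{p!j, p!Suc j} \<in> F" using Suc.prems unfolding is_path_def by auto
  ultimately show ?case using reach_edge reach_trans by metis
qed

lemma path_reach_hd_last: "is_path F p \<Longrightarrow> reach F (hd p) (last p)"
proof -
  assume p: "is_path F p"
  then have "p \<noteq> []" by (simp add: is_path_def)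
  then show ?thesis using path_reach[OF p, of "length p - 1"]
    by (simp add: hd_conv_nth last_conv_nth)
qed

lemma is_path_take: "is_path F p \<Longrightarrow> 0 < k \<Longrightarrow> is_path F (take k p)"
  unfolding is_path_def by auto

lemma is_path_snoc: "is_path F p \<Longrightarrow> z \<notin> set p \<Longrightarrow> {last p, z} \<in> F \<Longrightarrow> is_path F (p @ [z])"
  unfolding is_path_def
proof (intro conjI allI impI)
  fix i assume h: "p \<noteq> [] \<and> distinct p \<and> (\<forall>i. Suc i < length p \<longrightarrow> {p ! i, p ! Suc i} \<in> F)"
    "z \<notin> set p" "{last p, z} \<in> F" "Suc i < length (p @ [z])"
  show "{(p @ [z]) ! i, (p @ [z]) ! Suc i} \<in> F"
  proof (cases "Suc i < length p")
    case True then show ?thesis using h by (simp add: nth_append)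
  next
    case False
    then have "Suc i = length p" using h(4) by simp
    then have "i = length p - 1" by simp
    then show ?thesis using h by (simp add: nth_append last_conv_nth)
  qed
qed auto

lemma is_path_Cons: "is_path F p \<Longrightarrow> z \<notin> set p \<Longrightarrow> {z, hd p} \<in> F \<Longrightarrow> is_path F (z # p)"
  unfolding is_path_def
proof (intro conjI allI impI)
  fix i assume h: "p \<noteq> [] \<and> distinct p \<and> (\<forall>i. Suc i < length p \<longrightarrow> {p ! i, p ! Suc i} \<in> F)"
    "z \<notin> set p" "{z, hd p} \<in> F" "Suc i < length (z # p)"
  show "{(z # p) ! i, (z # p) ! Suc i} \<in> F"
  proof (cases i)
    case 0 then show ?thesis using h by (simp add: hd_conv_nth)
  next
    case (Suc j) then show ?thesis using h by simp
  qed
qed auto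

lemma is_path_tl: "is_path F (u # p) \<Longrightarrow> p \<noteq> [] \<Longrightarrow> is_path F p"
  unfolding is_path_def by (auto elim!: allE[where x="Suc _"])

lemma reach_path: "reach F u v \<Longrightarrow> \<exists>p. is_path F p \<and> hd p = u \<and> last p = v"
  unfolding reach_def
proof (induction rule: rtrancl_induct)
  case base
  then show ?case by (intro exI[of _ "[u]"]) (simp add: is_path_def)
next
  case (step z z')
  then obtain p where p: "is_path F p" "hd p = u" "last p = z" by blast
  have e: "{z, z'} \<in> F" using step(2) by (simp add: adjr_def)
  show ?case
  proof (cases "z' \<in> set p")
    case True
    then obtain k where k: "k < length p" "p ! k = z'" by (auto simp: in_set_conv_nth)
    have "is_path F (take (Suc k) p)" using is_path_take[OF p(1)] by simp
    moreover have "hd (take (Suc k) p) = u" using p k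
      by (metis hd_take zero_less_Suc)
    moreover have "last (take (Suc k) p) = z'" using k
      by (simp add: take_Suc_conv_app_nth)
    ultimately show ?thesis by blast
  next
    case False
    then have "is_path F (p @ [z'])" using is_path_snoc[OF p(1)] e p(3) by simp
    moreover have "hd (p @ [z']) = u" using p by (simp add: is_path_def hd_append)
    ultimately show ?thesis by (intro exI[of _ "p @ [z']"]) simp
  qed
qed

lemma connected_iff: "connected_graph V F \<longleftrightarrow> (\<forall>u\<in>V. \<forall>v\<in>V. reach F u v)"
  unfolding connected_graph_def using reach_path path_reach_hd_last by metis



definition bridges :: "'a set set \<Rightarrow> bool" where
  "bridges F \<longleftrightarrow> (\<forall>u v. {u,v} \<in> F \<longrightarrow> u \<noteq> v \<longrightarrow> \<not> reach (F - {{u,v}}) u v)"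

lemma is_path_mono: "is_path F p \<Longrightarrow> F \<subseteq> G \<Longrightarrow> is_path G p"
  unfolding is_path_def by auto

lemma is_path_minus:
  assumes "is_path F p" "\<And>i. Suc i < length p \<Longrightarrow> {p!i, p!Suc i} \<noteq> e"
  shows "is_path (F - {e}) p"
  using assms unfolding is_path_def by auto

lemma cycle_not_bridges:
  assumes "is_cycle F c" shows "\<not> bridges F"
proof
  assume br: "bridges F"
  from assms have len: "length c \<ge> 3" and p: "is_path F c" and e: "{last c, hd c} \<in> F"
    unfolding is_cycle_def by auto
  have d: "distinct c" using p by (simp add: is_path_def)
  have cne: "c \<noteq> []" using len by auto
  have hl: "hd c = c!0" "last c = c!(length c - 1)" using cne by (auto simp: hd_conv_nth last_conv_nth)
  have ne: "last c \<noteq> hd c" using nth_eq_iff_index_eq[OF d, of "length c - 1" 0] len hl cne by simp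
  have "is_path (F - {{last c, hd c}}) c"
  proof (rule is_path_minus[OF p])
    fix i assume i: "Suc i < length c"
    show "{c!i, c!Suc i} \<noteq> {last c, hd c}"
    proof
      assume eq: "{c!i, c!Suc i} = {last c, hd c}"
      then have "(c!i = last c \<and> c!Suc i = hd c) \<or> (c!i = hd c \<and> c!Suc i = last c)"
        by (auto simp: doubleton_eq_iff)
      then show False
      proof
        assume "c!i = last c \<and> c!Suc i = hd c"
        then have "i = length c - 1" using d i hl by (simp add: nth_eq_iff_index_eq)
        then show False using i by simp
      next
        assume "c!i = hd c \<and> c!Suc i = last c"
        then have c1: "c!i = c!0" and c2: "c!Suc i = c!(length c - 1)" using hl by auto
        have "i = 0" using nth_eq_iff_index_eq[OF d, of i 0] c1 i cne by simp
        moreover have "Suc i = length c - 1"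
          using nth_eq_iff_index_eq[OF d, of "Suc i" "length c - 1"] c2 i cne by simp
        ultimately have "i = 0" "Suc i = length c - 1" by auto
        then show False using len by simp
      qed
    qed
  qed
  then have "reach (F - {{last c, hd c}}) (hd c) (last c)" by (rule path_reach_hd_last)
  then have "reach (F - {{last c, hd c}}) (last c) (hd c)" by (rule reach_sym)
  then show False using br e ne unfolding bridges_def by blast
qed

lemma bridges_no_cycle: "bridges F \<Longrightarrow> \<nexists>c. is_cycle F c"
  using cycle_not_bridges by blast

lemma no_cycle_bridges:
  assumes "\<nexists>c. is_cycle F c" shows "bridges F"
  unfolding bridges_def
proof (intro allI impI notI)
  fix u v assume e: "{u,v} \<in> F" and ne: "u \<noteq> v" and r: "reach (F - {{u,v}}) u v"
  obtain p where p: "is_path (F - {{u,v}}) p" "hd p = u" "last p = v" using reach_path[OF r] by blast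
  have pne: "p \<noteq> []" and d: "distinct p" using p by (auto simp: is_path_def)
  have l2: "length p \<ge> 2"
  proof (rule ccontr)
    assume "\<not> length p \<ge> 2"
    moreover have "length p \<noteq> 0" using pne by simp
    ultimately have "length p = 1" by linarith
    then obtain z where "p = [z]" by (cases p) auto
    then have "hd p = last p" by simp
    then show False using p ne by simp
  qed
  have l3: "length p \<ge> 3"
  proof (rule ccontr)
    assume "\<not> length p \<ge> 3"
    then have "length p = 2" using l2 by simp
    then have "{p!0, p!1} \<in> F - {{u,v}}" using p(1) unfolding is_path_def by auto
    moreover have "p!0 = u" "p!1 = v" using p pne \<open>length p = 2\<close>
      by (auto simp: hd_conv_nth last_conv_nth)
    ultimately show False by simp
  qed
  have "is_cycle F p" unfolding is_cycle_def using l3 is_path_mono[OF p(1)] e p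
    by (auto simp: insert_commute)
  then show False using assms by blast
qed

lemma tree_bridges: "is_tree V T \<Longrightarrow> bridges T"
  unfolding is_tree_def using no_cycle_bridges by blast

lemma distinct_hd_last: "distinct q \<Longrightarrow> q \<noteq> [] \<Longrightarrow> hd q = last q \<Longrightarrow> q = [hd q]"
proof (cases q)
  case (Cons a l)
  assume "distinct q" "hd q = last q"
  show ?thesis
  proof (cases l)
    case (Cons b l')
    then have "last q \<in> set l" using \<open>q = a # l\<close> by simp
    then show ?thesis using \<open>distinct q\<close> \<open>hd q = last q\<close> \<open>q = a # l\<close> by simp
  qed (use \<open>q = a # l\<close> in simp)
qed simp

lemma path_unique:
  assumes "bridges F" shows "is_path F p \<Longrightarrow> is_path F q \<Longrightarrow> hd p = hd q \<Longrightarrow> last p = last q \<Longrightarrow> p = q"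
proof (induction p arbitrary: q)
  case Nil then show ?case by (simp add: is_path_def)
next
  case (Cons u p')
  have dq: "distinct q" "q \<noteq> []" using Cons.prems by (auto simp: is_path_def)
  have dp: "distinct (u # p')" using Cons.prems by (auto simp: is_path_def)
  show ?case
  proof (cases "p' = []")
    case True
    then have "hd q = last q" using Cons.prems by simp
    then have "q = [hd q]" using dq distinct_hd_last by blast
    then show ?thesis using True Cons.prems by (cases q) auto
  next
    case False
    obtain q' where q: "q = u # q'" using dq Cons.prems by (cases q) auto
    have "q' \<noteq> []"
    proof
      assume "q' = []"
      then have "last p' = u" using Cons.prems q False by simp
      then show False using dp last_in_set[OF False] by simp
    qed
    have pp': "is_path F p'" using is_path_tl[OF Cons.prems(1) False] .
    have qq': "is_path F q'" using is_path_tl[of F u q'] Cons.prems(2) q \<open>q' \<noteq> []\<close> by simp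
    show ?thesis
    proof (cases "hd p' = hd q'")
      case True
      have "last p' = last q'" using Cons.prems(4) q False \<open>q' \<noteq> []\<close> by simp
      then have "p' = q'" using Cons.IH[OF pp' qq' True] by simp
      then show ?thesis using q by simp
    next
      case ne: False
      let ?e = "{u, hd p'}"
      have "{(u#p')!0, (u#p')!Suc 0} \<in> F" using Cons.prems(1) False unfolding is_path_def
        by (metis length_Cons length_greater_0_conv Suc_less_eq)
      then have eF: "?e \<in> F" using False by (simp add: hd_conv_nth)
      have uneq: "u \<noteq> hd p'" using dp hd_in_set[OF False] by auto
      have "is_path (F - {?e}) q"
      proof (rule is_path_minus[OF Cons.prems(2)])
        fix i assume i: "Suc i < length q"
        show "{q!i, q!Suc i} \<noteq> ?e"
        proof (cases i)
          case 0
          then show ?thesis using q ne \<open>q' \<noteq> []\<close> uneq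
            by (auto simp: hd_conv_nth doubleton_eq_iff)
        next
          case (Suc j)
          have "q!i \<noteq> u" "q!Suc i \<noteq> u" using dq i q Suc
            by (auto simp: nth_eq_iff_index_eq)
          then show ?thesis by (auto simp: doubleton_eq_iff)
        qed
      qed
      then have r1: "reach (F - {?e}) u (last q)" using path_reach_hd_last q by fastforce
      have "is_path (F - {?e}) p'"
      proof (rule is_path_minus[OF pp'])
        fix i assume i: "Suc i < length p'"
        have "p'!i \<noteq> u" "p'!Suc i \<noteq> u" using dp i by (auto dest: nth_mem)
        then show "{p'!i, p'!Suc i} \<noteq> ?e" by (auto simp: doubleton_eq_iff)
      qed
      then have r2: "reach (F - {?e}) (hd p') (last q)" using path_reach_hd_last Cons.prems False by fastforce
      have "reach (F - {?e}) u (hd p')" using r1 r2 reach_sym reach_trans by metis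
      then show ?thesis using assms eF uneq unfolding bridges_def by blast
    qed
  qed
qed

lemma tree_path_eq:
  assumes "is_tree V T" "is_path T p" "hd p = u" "last p = v"
  shows "tree_path T u v = p"
  unfolding tree_path_def
proof (rule the_equality)
  show "is_path T p \<and> hd p = u \<and> last p = v" using assms by simp
  fix q assume "is_path T q \<and> hd q = u \<and> last q = v"
  then show "q = p" using path_unique[OF tree_bridges[OF assms(1)], of q p] assms by simp
qed

lemma tree_path_props:
  assumes "is_tree V T" "u \<in> V" "v \<in> V"
  shows "is_path T (tree_path T u v) \<and> hd (tree_path T u v) = u \<and> last (tree_path T u v) = v"
proof -
  have "connected_graph V T" using assms(1) unfolding is_tree_def by simp
  then have "reach T u v" using assms(2,3) unfolding connected_iff by simp
  then have "\<exists>p. is_path T p \<and> hd p = u \<and> last p = v" by (rule reach_path)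
  then obtain p where p: "is_path T p" "hd p = u" "last p = v" by blast
  have "tree_path T u v = p" by (rule tree_path_eq[OF assms(1) p])
  then show ?thesis using p by simp
qed



lemma isolated_reach: "(\<forall>e\<in>F. a \<notin> e) \<Longrightarrow> reach F a z \<Longrightarrow> z = a"
proof -
  assume h: "\<forall>e\<in>F. a \<notin> e" and "reach F a z"
  then have "(a,z) \<in> (adjr F)\<^sup>*" by (simp add: reach_def)
  then show "z = a"
  proof (induction rule: rtrancl_induct)
    case base then show ?case by simp
  next
    case (step y z) then show ?case using h by (auto simp: adjr_def)
  qed
qed

lemma split_reach:
  assumes "reach F u w" shows "reach (F - {{u,v}}) u w \<or> reach (F - {{u,v}}) v w"
proof -
  have "(u,w) \<in> (adjr F)\<^sup>*" using assms by (simp add: reach_def)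
  then show ?thesis
proof (induction rule: rtrancl_induct)
  case base then show ?case by simp
next
  case (step y z)
  then have yz: "{y,z} \<in> F" by (simp add: adjr_def)
  show ?case
  proof (cases "{y,z} = {u,v}")
    case True
    then have "z = u \<or> z = v" by (auto simp: doubleton_eq_iff)
    then show ?thesis by auto
  next
    case False
    then have "reach (F - {{u,v}}) y z" using yz by (intro reach_edge) simp
    then show ?thesis using step.IH reach_trans by metis
  qed
qed
qed

lemma add_edge_reach:
  assumes "reach (H \<union> {{a,b}}) p q"
  shows "reach H p q \<or> ((reach H p a \<or> reach H p b) \<and> (reach H a q \<or> reach H b q))"
proof -
  have "(p,q) \<in> (adjr (H \<union> {{a,b}}))\<^sup>*" using assms by (simp add: reach_def)
  then show ?thesis
proof (induction rule: rtrancl_induct)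
  case base then show ?case by simp
next
  case (step y z)
  then have yz: "{y,z} \<in> H \<union> {{a,b}}" by (simp add: adjr_def)
  show ?case
  proof (cases "{y,z} = {a,b}")
    case True
    then have "(y = a \<and> z = b) \<or> (y = b \<and> z = a)" by (auto simp: doubleton_eq_iff)
    then show ?thesis using step.IH by auto
  next
    case False
    then have "reach H y z" using yz by (intro reach_edge) simp
    then show ?thesis using step.IH reach_trans by metis
  qed
qed
qed

lemma exchange:
  assumes tr: "is_tree V T" and e: "{u,v} \<in> T" and ab: "a \<in> V" "b \<in> V" "a \<noteq> b"
    and nr: "\<not> reach (T - {{u,v}}) a b"
  shows "is_tree V (T - {{u,v}} \<union> {{a,b}}) \<and> {a,b} \<notin> T - {{u,v}}"
proof -
  let ?H = "T - {{u,v}}"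
  let ?T = "?H \<union> {{a,b}}"
  have sg: "simple_graph V T" using tr unfolding is_tree_def by simp
  have con: "\<forall>x\<in>V. \<forall>y\<in>V. reach T x y" using tr unfolding is_tree_def connected_iff by simp
  have br: "bridges T" using tr by (rule tree_bridges)
  have uV: "u \<in> V" using sg e unfolding simple_graph_def by (auto simp: doubleton_eq_iff)
  have side: "reach ?H w u \<or> reach ?H w v" if "w \<in> V" for w
  proof -
    have "reach T u w" using con uV that by simp
    then have "reach ?H u w \<or> reach ?H v w" by (rule split_reach)
    then show ?thesis using reach_sym[of ?H u w] reach_sym[of ?H v w] by blast
  qed
  have notin: "{a,b} \<notin> ?H"
  proof
    assume "{a,b} \<in> ?H"
    then have "reach ?H a b" by (rule reach_edge)
    then show False using nr by simp
  qed
  have sg': "simple_graph V ?T" using sg ab unfolding simple_graph_def by auto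
  have m: "?H \<subseteq> ?T" by auto
  have ab': "reach ?T a b" by (rule reach_edge) simp
  have uv: "reach ?T u v"
  proof -
    have "(reach ?H a u \<and> reach ?H b v) \<or> (reach ?H a v \<and> reach ?H b u)"
    proof -
      have s1: "reach ?H a u \<or> reach ?H a v" by (rule side[OF ab(1)])
      have s2: "reach ?H b u \<or> reach ?H b v" by (rule side[OF ab(2)])
      have n1: "\<not> (reach ?H a u \<and> reach ?H b u)"
        using nr reach_sym[of ?H b u] reach_trans[of ?H a u b] by blast
      have n2: "\<not> (reach ?H a v \<and> reach ?H b v)"
        using nr reach_sym[of ?H b v] reach_trans[of ?H a v b] by blast
      show ?thesis using s1 s2 n1 n2 by blast
    qed
    then show ?thesis
    proof
      assume h: "reach ?H a u \<and> reach ?H b v"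
      have "reach ?T u a" using reach_mono[OF m, of u a] reach_sym[of ?H a u] h by blast
      moreover have "reach ?T b v" using reach_mono[OF m, of b v] h by blast
      ultimately show ?thesis using ab' reach_trans[of ?T u a b] reach_trans[of ?T u b v] by blast
    next
      assume h: "reach ?H a v \<and> reach ?H b u"
      have "reach ?T u b" using reach_mono[OF m, of u b] reach_sym[of ?H b u] h by blast
      moreover have "reach ?T a v" using reach_mono[OF m, of a v] h by blast
      moreover have "reach ?T b a" using ab' by (rule reach_sym)
      ultimately show ?thesis using reach_trans[of ?T u b a] reach_trans[of ?T u a v] by blast
    qed
  qed
  have tou: "reach ?T x u" if "x \<in> V" for x
  proof -
    have "reach ?H x u \<or> reach ?H x v" by (rule side[OF that])
    then show ?thesis
    proof
      assume "reach ?H x u" then show ?thesis by (rule reach_mono[OF m])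
    next
      assume "reach ?H x v" then have "reach ?T x v" by (rule reach_mono[OF m])
      moreover have "reach ?T v u" using uv by (rule reach_sym)
      ultimately show ?thesis by (rule reach_trans)
    qed
  qed
  have con': "\<forall>x\<in>V. \<forall>y\<in>V. reach ?T x y"
  proof (intro ballI)
    fix x y assume "x \<in> V" "y \<in> V"
    have "reach ?T x u" using tou \<open>x \<in> V\<close> by blast
    moreover have "reach ?T u y" using tou[OF \<open>y \<in> V\<close>] by (rule reach_sym)
    ultimately show "reach ?T x y" by (rule reach_trans)
  qed
  have br': "bridges ?T" unfolding bridges_def
  proof (intro allI impI notI)
    fix p q assume pq: "{p,q} \<in> ?T" "p \<noteq> q" and r: "reach (?T - {{p,q}}) p q"
    show False
    proof (cases "{p,q} = {a,b}")
      case True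
      then have "?T - {{p,q}} = ?H" using notin by auto
      then have "reach ?H p q" using r by simp
      moreover have "(p = a \<and> q = b) \<or> (p = b \<and> q = a)" using True by (auto simp: doubleton_eq_iff)
      ultimately have "reach ?H a b" using reach_sym[of ?H b a] by blast
      then show False using nr by simp
    next
      case False
      then have pqH: "{p,q} \<in> ?H" using pq by simp
      let ?K = "?H - {{p,q}}"
      have eq: "?T - {{p,q}} = ?K \<union> {{a,b}}" using False by auto
      have "reach (?K \<union> {{a,b}}) p q" using r eq by simp
      then have K: "reach ?K p q \<or> ((reach ?K p a \<or> reach ?K p b) \<and> (reach ?K a q \<or> reach ?K b q))"
        by (rule add_edge_reach)
      have m1: "?K \<subseteq> T - {{p,q}}" by auto
      have m2: "?K \<subseteq> ?H" by auto
      have nt: "\<not> reach (T - {{p,q}}) p q" using br pqH pq(2) unfolding bridges_def by blast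
      have pqr: "reach ?H p q" using pqH by (rule reach_edge)
      show False
      proof (cases "reach ?K p q")
        case True then show False using nt reach_mono[OF m1, of p q] by blast
      next
        case nK: False
        then have h: "(reach ?K p a \<or> reach ?K p b) \<and> (reach ?K a q \<or> reach ?K b q)"
          using K by blast
        have "reach ?H a b"
        proof -
          have c: "(reach ?K p a \<and> reach ?K a q) \<or> (reach ?K p b \<and> reach ?K b q)
            \<or> (reach ?K p a \<and> reach ?K b q) \<or> (reach ?K p b \<and> reach ?K a q)" using h by blast
          then show ?thesis
          proof (elim disjE conjE)
            assume "reach ?K p a" "reach ?K a q"
            then have "reach ?K p q" by (rule reach_trans)
            then show ?thesis using nK by simp
          next
            assume "reach ?K p b" "reach ?K b q"
            then have "reach ?K p q" by (rule reach_trans)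
            then show ?thesis using nK by simp
          next
            assume "reach ?K p a" "reach ?K b q"
            then have 1: "reach ?H a p" "reach ?H q b"
              using reach_mono[OF m2, of p a] reach_mono[OF m2, of b q] reach_sym[of ?H p a] reach_sym[of ?H b q] by blast+
            have "reach ?H a q" using 1(1) pqr by (rule reach_trans)
            then show ?thesis using 1(2) by (rule reach_trans)
          next
            assume "reach ?K p b" "reach ?K a q"
            then have 1: "reach ?H b p" "reach ?H q a"
              using reach_mono[OF m2, of p b] reach_mono[OF m2, of a q] reach_sym[of ?H p b] reach_sym[of ?H a q] by blast+
            have "reach ?H b q" using 1(1) pqr by (rule reach_trans)
            then have "reach ?H b a" using 1(2) by (rule reach_trans)
            then show ?thesis by (rule reach_sym)
          qed
        qed
        then show False using nr by simp
      qed
    qed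
  qed
  have "is_tree V ?T" unfolding is_tree_def connected_iff using sg' con' bridges_no_cycle[OF br'] by blast
  then show ?thesis using notin by blast
qed



lemma degree_ge1: "finite F \<Longrightarrow> e \<in> F \<Longrightarrow> w \<in> e \<Longrightarrow> degree F w \<ge> 1"
  unfolding degree_def
  by (metis (mono_tags, lifting) One_nat_def Suc_leI card_gt_0_iff empty_iff finite_subset mem_Collect_eq subsetI)

lemma degree_ge2: "finite F \<Longrightarrow> e1 \<in> F \<Longrightarrow> e2 \<in> F \<Longrightarrow> e1 \<noteq> e2 \<Longrightarrow> w \<in> e1 \<Longrightarrow> w \<in> e2 \<Longrightarrow> degree F w \<ge> 2"
proof -
  assume h: "finite F" "e1 \<in> F" "e2 \<in> F" "e1 \<noteq> e2" "w \<in> e1" "w \<in> e2"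
  have "{e1, e2} \<subseteq> {e \<in> F. w \<in> e}" using h by auto
  moreover have "finite {e \<in> F. w \<in> e}" using h by simp
  ultimately have "card {e1, e2} \<le> degree F w" unfolding degree_def by (rule card_mono[rotated])
  then show ?thesis using h by simp
qed

lemma degree_ge3: "finite F \<Longrightarrow> e1 \<in> F \<Longrightarrow> e2 \<in> F \<Longrightarrow> e3 \<in> F \<Longrightarrow> e1 \<noteq> e2 \<Longrightarrow> e1 \<noteq> e3 \<Longrightarrow> e2 \<noteq> e3
  \<Longrightarrow> w \<in> e1 \<Longrightarrow> w \<in> e2 \<Longrightarrow> w \<in> e3 \<Longrightarrow> degree F w \<ge> 3"
proof -
  assume h: "finite F" "e1 \<in> F" "e2 \<in> F" "e3 \<in> F" "e1 \<noteq> e2" "e1 \<noteq> e3" "e2 \<noteq> e3" "w \<in> e1" "w \<in> e2" "w \<in> e3"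
  have "{e1, e2, e3} \<subseteq> {e \<in> F. w \<in> e}" using h by auto
  moreover have "finite {e \<in> F. w \<in> e}" using h by simp
  ultimately have "card {e1, e2, e3} \<le> degree F w" unfolding degree_def by (rule card_mono[rotated])
  then show ?thesis using h by simp
qed

lemma degree_le2_cases:
  assumes "finite F" "degree F w \<le> 2" "e1 \<in> F" "e2 \<in> F" "e1 \<noteq> e2" "w \<in> e1" "w \<in> e2" "g \<in> F" "w \<in> g"
  shows "g = e1 \<or> g = e2"
proof (rule ccontr)
  assume "\<not> (g = e1 \<or> g = e2)"
  then have "degree F w \<ge> 3" using degree_ge3[of F e1 e2 g w] assms by auto
  then show False using assms(2) by simp
qed

lemma degree_exchange:
  assumes "finite F" "e \<in> F" "f \<notin> F - {e}"
  shows "degree (F - {e} \<union> {f}) w = degree F w - (if w \<in> e then 1 else 0) + (if w \<in> f then 1 else 0)"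
proof -
  let ?A = "{g \<in> F. w \<in> g}"
  have fin: "finite ?A" using assms by simp
  have eq: "{g \<in> F - {e} \<union> {f}. w \<in> g} = (?A - {e}) \<union> (if w \<in> f then {f} else {})" by auto
  have c1: "card (?A - {e}) = card ?A - (if w \<in> e then 1 else 0)"
    using fin assms(2) by (simp add: card_Diff_singleton_if)
  have "f \<notin> ?A - {e}" using assms(3) by auto
  then have c2: "card ((?A - {e}) \<union> (if w \<in> f then {f} else {})) = card (?A - {e}) + (if w \<in> f then 1 else 0)"
    using fin by auto
  show ?thesis unfolding degree_def eq c2 c1 ..
qed

lemma degree_one: "finite F \<Longrightarrow> degree F w = 1 \<Longrightarrow> \<exists>e. {g \<in> F. w \<in> g} = {e}"
  unfolding degree_def by (simp add: card_1_singleton_iff)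

definition remset :: "'a set \<Rightarrow> 'a set set \<Rightarrow> 'a set" where
  "remset V T = {w. \<exists>x\<in>leaves V T. \<exists>y\<in>branches V T.
       set (tree_path T x y) \<inter> branches V T = {y} \<and> w \<in> set (tree_path T x y) - {y}}"

lemma remsetI: "l \<in> leaves V T \<Longrightarrow> y \<in> branches V T \<Longrightarrow> set (tree_path T l y) \<inter> branches V T = {y}
  \<Longrightarrow> w \<in> set (tree_path T l y) - {y} \<Longrightarrow> w \<in> remset V T"
  unfolding remset_def by blast

lemma remsetE: "w \<in> remset V T \<Longrightarrow> (\<And>l y. l \<in> leaves V T \<Longrightarrow> y \<in> branches V T \<Longrightarrow> set (tree_path T l y) \<inter> branches V T = {y}
  \<Longrightarrow> w \<in> set (tree_path T l y) - {y} \<Longrightarrow> P) \<Longrightarrow> P"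
  unfolding remset_def by blast

lemma r_stem_remset: "r_stem V T = V - remset V T"
  unfolding r_stem_def remset_def by simp

lemma is_path_sub: "is_path F p \<Longrightarrow> (\<And>i. Suc i < length p \<Longrightarrow> {p!i, p!Suc i} \<in> G) \<Longrightarrow> is_path G p"
  unfolding is_path_def by auto

lemma set_take_Suc: "k < length Q \<Longrightarrow> z \<in> set (take (Suc k) Q) \<Longrightarrow> \<exists>j\<le>k. z = Q!j"
  by (auto simp: in_set_conv_nth less_Suc_eq_le)



theorem claim4p3:
  fixes V :: "'a set" and E T :: "'a set set" and b r s :: 'a and i :: nat
  assumes "simple_graph V E"
    and "connected_graph V E"
    and "\<not> hamiltonian_path V E"
    and "C2 V E T"
    and "b \<in> branches V T" and "r \<in> branches V T"
    and "set (tree_path T b r) \<inter> branches V T = {b, r}"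
    and "s \<in> leaves V T"
    and "0 < i" and "i < length (tree_path T b r)"
    and "{s, tree_path T b r ! i} \<in> E"
  shows "{s, tree_path T b r ! (i - 1)} \<notin> E"
proof
  assume sxmE: "{s, tree_path T b r ! (i - 1)} \<in> E"
  define P where "P = tree_path T b r"
  define x where "x = P ! i"
  define xm where "xm = P ! (i - 1)"
  define Br where "Br = branches V T"
  have i: "0 < i" "i < length P" using assms(9,10) P_def by auto
  have sxE: "{s,x} \<in> E" using assms(11) P_def x_def by simp
  have sxmE': "{s,xm} \<in> E" using sxmE P_def xm_def by simp
  have C1T: "C1 V E T" using assms(4) unfolding C2_def by simp
  have TE: "T \<subseteq> E" and tr: "is_tree V T" using C1T unfolding C1_def spanning_tree_def by auto
  have sg: "simple_graph V T" using tr unfolding is_tree_def by simp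
  have finV: "finite V" using sg unfolding simple_graph_def by simp
  have TPow: "T \<subseteq> Pow V" using sg unfolding simple_graph_def by auto
  have finT: "finite T" using finV TPow finite_subset by blast
  have bBr: "b \<in> Br" and rBr: "r \<in> Br" using assms(5,6) Br_def by auto
  have BrV: "Br \<subseteq> V" unfolding Br_def branches_def by auto
  have bV: "b \<in> V" and rV: "r \<in> V" using bBr rBr BrV by auto
  have degBr: "z \<in> Br \<Longrightarrow> degree T z \<ge> 3" for z unfolding Br_def branches_def by auto
  have Pp: "is_path T P" "hd P = b" "last P = r" using tree_path_props[OF tr bV rV] P_def by auto
  have Pne: "P \<noteq> []" and Pd: "distinct P" using Pp unfolding is_path_def by auto
  have P0: "P ! 0 = b" using Pp Pne by (simp add: hd_conv_nth)
  have Plast: "P ! (length P - 1) = r" using Pp Pne by (simp add: last_conv_nth)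
  have Pedge: "Suc k < length P \<Longrightarrow> {P!k, P!Suc k} \<in> T" for k using Pp unfolding is_path_def by auto
  have exm: "{xm, x} \<in> T" using Pedge[of "i - 1"] i x_def xm_def by simp
  have xneq: "xm \<noteq> x" using Pd i x_def xm_def nth_eq_iff_index_eq[OF Pd, of "i - 1" i] by auto
  have xV: "x \<in> V" and xmV: "xm \<in> V" using exm TPow by auto
  have xP: "x \<in> set P" and xmP: "xm \<in> set P" using i x_def xm_def by auto
  have interior_edges: "0 < k \<Longrightarrow> k < length P - 1 \<Longrightarrow>
      {P!(k-1), P!k} \<in> T \<and> {P!k, P!Suc k} \<in> T \<and> {P!(k-1), P!k} \<noteq> {P!k, P!Suc k}" for k
  proof -
    assume k: "0 < k" "k < length P - 1"
    have e1: "{P!(k-1), P!k} \<in> T" using Pedge[of "k - 1"] k by simp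
    have e2: "{P!k, P!Suc k} \<in> T" using Pedge[of k] k by simp
    have "P!(k-1) \<noteq> P!Suc k" using nth_eq_iff_index_eq[OF Pd, of "k - 1" "Suc k"] k by simp
    moreover have "P!(k-1) \<noteq> P!k" using nth_eq_iff_index_eq[OF Pd, of "k - 1" k] k by simp
    ultimately have "{P!(k-1), P!k} \<noteq> {P!k, P!Suc k}" by (auto simp: doubleton_eq_iff)
    then show ?thesis using e1 e2 by simp
  qed
  have degP: "z \<in> set P \<Longrightarrow> degree T z \<ge> 2" for z
  proof -
    assume "z \<in> set P"
    then obtain k where k: "k < length P" "z = P!k" by (auto simp: in_set_conv_nth)
    show ?thesis
    proof (cases "k = 0 \<or> k = length P - 1")
      case True
      then have "z \<in> Br" using k P0 Plast bBr rBr by auto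
      then show ?thesis using degBr by fastforce
    next
      case False
      then have "0 < k" "k < length P - 1" using k by auto
      then show ?thesis using interior_edges[of k] degree_ge2[OF finT] k by auto
    qed
  qed
  have sV: "s \<in> V" and degs: "degree T s = 1" using assms(8) unfolding leaves_def by auto
  have sP: "s \<notin> set P" using degP degs by fastforce
  have sBr: "s \<notin> Br" using degBr degs by fastforce
  have sx: "s \<noteq> x" and sxm: "s \<noteq> xm" using sP xP xmP by auto
  obtain es where es: "{g \<in> T. s \<in> g} = {es}" using degree_one[OF finT degs] by blast
  have esT: "es \<in> T" and ses: "s \<in> es" using es by auto
  have only: "g \<in> T \<Longrightarrow> s \<in> g \<Longrightarrow> g = es" for g using es by auto
  obtain s' where s': "es = {s, s'}" "s' \<noteq> s"
  proof -
    obtain u v where "es = {u,v}" "u \<noteq> v" using sg esT unfolding simple_graph_def by blast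
    then show ?thesis using that ses by auto
  qed
  have ss'T: "{s,s'} \<in> T" using esT s' by simp
  have s'V: "s' \<in> V" using ss'T TPow by auto
  have degs'1: "degree T s' \<ge> 1" using degree_ge1[OF finT ss'T] by simp
  define T1 where "T1 = T - {{s,s'}} \<union> {{s,x}}"
  have nr1: "\<not> reach (T - {{s,s'}}) s x"
  proof
    assume "reach (T - {{s,s'}}) s x"
    moreover have "\<forall>e\<in>T - {{s,s'}}. s \<notin> e" using only s' by auto
    ultimately have "x = s" using isolated_reach by metis
    then show False using sx by simp
  qed
  have ex1: "is_tree V T1 \<and> {s,x} \<notin> T - {{s,s'}}"
    using exchange[OF tr ss'T sV xV sx nr1] T1_def by simp
  have tr1: "is_tree V T1" using ex1 by simp
  have exm1: "{xm,x} \<in> T1" using exm sx sxm s' T1_def by (auto simp: doubleton_eq_iff)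
  have sx1: "{s,x} \<in> T1 - {{xm,x}}" using T1_def sx sxm by (auto simp: doubleton_eq_iff)
  have nr2: "\<not> reach (T1 - {{xm,x}}) s xm"
  proof
    assume "reach (T1 - {{xm,x}}) s xm"
    then have "reach (T1 - {{xm,x}}) xm s" by (rule reach_sym)
    moreover have "reach (T1 - {{xm,x}}) s x" using sx1 by (rule reach_edge)
    ultimately have "reach (T1 - {{xm,x}}) xm x" by (rule reach_trans)
    then show False using tree_bridges[OF tr1] exm1 xneq unfolding bridges_def by blast
  qed
  define T' where "T' = T1 - {{xm,x}} \<union> {{s,xm}}"
  have ex2: "is_tree V T' \<and> {s,xm} \<notin> T1 - {{xm,x}}"
    using exchange[OF tr1 exm1 sV xmV sxm nr2] T'_def by simp
  have tr': "is_tree V T'" using ex2 by simp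
  have T'E: "T' \<subseteq> E" using TE sxE sxmE' unfolding T'_def T1_def by auto
  have span': "spanning_tree V E T'" unfolding spanning_tree_def using T'E tr' by simp
  have finT1: "finite T1" using finT T1_def by simp
  have d1: "degree T1 w = degree T w - (if w \<in> {s,s'} then 1 else 0) + (if w \<in> {s,x} then 1 else 0)" for w
    unfolding T1_def by (rule degree_exchange[OF finT ss'T]) (use ex1 in simp)
  have d2: "degree T' w = degree T1 w - (if w \<in> {xm,x} then 1 else 0) + (if w \<in> {s,xm} then 1 else 0)" for w
    unfolding T'_def by (rule degree_exchange[OF finT1 exm1]) (use ex2 in simp)
  have degT1x: "degree T1 x \<ge> 1" and degT1xm: "degree T1 xm \<ge> 1"
    using degree_ge1[OF finT1 exm1] by auto
  have D1: "degree T' s = 2" using d1[of s] d2[of s] degs sx sxm s' by simp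
  have D2: "w \<noteq> s \<Longrightarrow> degree T' w = degree T w - (if w = s' then 1 else 0)" for w
  proof -
    assume ws: "w \<noteq> s"
    have A: "degree T1 w = degree T w - (if w = s' then 1 else 0) + (if w = x then 1 else 0)"
      using d1[of w] ws by simp
    have B: "degree T' w = degree T1 w - (if w = xm \<or> w = x then 1 else 0) + (if w = xm then 1 else 0)"
      using d2[of w] ws by simp
    show ?thesis
    proof (cases "w = x")
      case True then show ?thesis using A B xneq by simp
    next
      case False
      then show ?thesis
      proof (cases "w = xm")
        case True then show ?thesis using A B degT1xm \<open>w \<noteq> x\<close> by simp
      next
        case False then show ?thesis using A B \<open>w \<noteq> x\<close> by simp
      qed
    qed
  qed
  have finL: "finite (leaves V T)" using finV unfolding leaves_def by simp
  have sL: "s \<in> leaves V T" using assms(8) .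
  show False
  proof (cases "degree T s' = 2")
    case False
    have "leaves V T' \<subseteq> leaves V T - {s}"
    proof
      fix w assume "w \<in> leaves V T'"
      then have w: "w \<in> V" "degree T' w = 1" unfolding leaves_def by auto
      have "w \<noteq> s" using w D1 by auto
      moreover have "w \<noteq> s'" using w D2[of s'] s' False by auto
      ultimately show "w \<in> leaves V T - {s}" using w D2[of w] unfolding leaves_def by (auto split: if_splits)
    qed
    then have "card (leaves V T') \<le> card (leaves V T - {s})" using finL by (intro card_mono) auto
    also have "\<dots> < card (leaves V T)" using finL sL by (rule card_Diff1_less)
    finally have "card (leaves V T') < card (leaves V T)" .
    moreover have "card (leaves V T) \<le> card (leaves V T')" using C1T span' unfolding C1_def by blast
    ultimately show False by simp
  next
    case True
    have s'P: "s' \<notin> set P"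
    proof
      assume "s' \<in> set P"
      then obtain k where k: "k < length P" "s' = P!k" by (auto simp: in_set_conv_nth)
      show False
      proof (cases "k = 0 \<or> k = length P - 1")
        case True
        then have "s' \<in> Br" using k P0 Plast bBr rBr by auto
        then show False using degBr \<open>degree T s' = 2\<close> by fastforce
      next
        case False
        then have kk: "0 < k" "k < length P - 1" using k by auto
        have sub1: "{P!(k-1), P!k} \<subseteq> set P" and sub2: "{P!k, P!Suc k} \<subseteq> set P" using kk by auto
        have n1: "{s,s'} \<noteq> {P!(k-1), P!k}" using sub1 sP by (auto simp: doubleton_eq_iff)
        have n2: "{s,s'} \<noteq> {P!k, P!Suc k}" using sub2 sP by (auto simp: doubleton_eq_iff)
        have "degree T s' \<ge> 3"
          using degree_ge3[OF finT _ _ ss'T _ _ _ _ _, of "{P!(k-1), P!k}" "{P!k, P!Suc k}" s']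
            interior_edges[OF kk] n1 n2 k by auto
        then show False using \<open>degree T s' = 2\<close> by simp
      qed
    qed
    have BrEq: "branches V T' = Br"
    proof -
      have "degree T' w \<ge> 3 \<longleftrightarrow> degree T w \<ge> 3" for w
      proof (cases "w = s")
        case True then show ?thesis using D1 degs by simp
      next
        case False then show ?thesis using D2[of w] True by auto
      qed
      then show ?thesis unfolding Br_def branches_def by auto
    qed
    have L2: "leaves V T' \<subseteq> insert s' (leaves V T - {s})"
    proof
      fix w assume "w \<in> leaves V T'"
      then have w: "w \<in> V" "degree T' w = 1" unfolding leaves_def by auto
      have "w \<noteq> s" using w D1 by auto
      then show "w \<in> insert s' (leaves V T - {s})" using w D2[of w] unfolding leaves_def by (auto split: if_splits)
    qed
    have "card (leaves V T') \<le> card (insert s' (leaves V T - {s}))" using finL L2 by (intro card_mono) auto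
    also have "\<dots> \<le> card (leaves V T - {s}) + 1" by (simp add: card_insert_le_m1 card_insert_if finL)
    also have "\<dots> = card (leaves V T)" using finL sL card_Diff1_less[OF finL sL]
      by (simp add: card_Diff_singleton)
    finally have cardL: "card (leaves V T') \<le> card (leaves V T)" .
    have C1': "C1 V E T'" unfolding C1_def
    proof (intro conjI allI impI)
      show "spanning_tree V E T'" by (rule span')
      fix T'' assume "spanning_tree V E T''"
      then have "card (leaves V T) \<le> card (leaves V T'')" using C1T unfolding C1_def by blast
      then show "card (leaves V T') \<le> card (leaves V T'')" using cardL by simp
    qed
    have C2bound: "card (r_stem V T') \<le> card (r_stem V T)" using assms(4) C1' unfolding C2_def by blast
    have R1: "s \<in> remset V T"
    proof -
      define Q where "Q = tree_path T s b"
      have Qp: "is_path T Q" "hd Q = s" "last Q = b" using tree_path_props[OF tr sV bV] Q_def by auto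
      have Qne: "Q \<noteq> []" using Qp unfolding is_path_def by simp
      have exk: "\<exists>k. k < length Q \<and> Q!k \<in> Br"
        using Qp Qne bBr by (intro exI[of _ "length Q - 1"]) (simp add: last_conv_nth)
      define k where "k = (LEAST k. k < length Q \<and> Q!k \<in> Br)"
      have k: "k < length Q" "Q!k \<in> Br" using LeastI_ex[OF exk] k_def by auto
      have kmin: "j < k \<Longrightarrow> Q!j \<notin> Br" for j using not_less_Least[of j "\<lambda>k. k < length Q \<and> Q!k \<in> Br"] k k_def by auto
      define y where "y = Q!k"
      define Q' where "Q' = take (Suc k) Q"
      have Q'p: "is_path T Q'" using is_path_take[OF Qp(1)] Q'_def by simp
      have hdQ': "hd Q' = s" using Qp Q'_def by (metis hd_take zero_less_Suc)
      have lastQ': "last Q' = y" using k Q'_def y_def by (simp add: take_Suc_conv_app_nth)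
      have tpQ: "tree_path T s y = Q'" using tree_path_eq[OF tr Q'p hdQ' lastQ'] .
      have yQ': "y \<in> set Q'" using lastQ' Q'p unfolding is_path_def by (metis last_in_set)
      have "set Q' \<inter> Br = {y}"
      proof
        show "set Q' \<inter> Br \<subseteq> {y}"
        proof
          fix z assume z: "z \<in> set Q' \<inter> Br"
          then obtain j where j: "j \<le> k" "z = Q!j" using set_take_Suc[OF k(1)] Q'_def by blast
          have "\<not> j < k" using kmin[of j] j z by blast
          then show "z \<in> {y}" using j y_def by simp
        qed
        show "{y} \<subseteq> set Q' \<inter> Br" using yQ' k y_def by simp
      qed
      moreover have "s \<in> set Q' - {y}"
        using hdQ' Q'p sBr k y_def unfolding is_path_def by (metis DiffI hd_in_set singletonD)
      ultimately show ?thesis using remsetI[OF sL, of y s] k y_def tpQ Br_def by simp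
    qed
    define S where "S = insert s (set P)"
    have K: "z \<in> S \<Longrightarrow> z \<notin> Br \<Longrightarrow> {z,z'} \<in> T' \<Longrightarrow> z' \<in> S" for z z'
    proof -
      assume z: "z \<in> S" "z \<notin> Br" and e: "{z,z'} \<in> T'"
      have "{z,z'} = {s,xm} \<or> {z,z'} = {s,x} \<or> ({z,z'} \<in> T \<and> {z,z'} \<noteq> {s,s'})"
        using e unfolding T'_def T1_def by auto
      then show "z' \<in> S"
      proof (elim disjE conjE)
        assume "{z,z'} = {s,xm}" then show ?thesis using xmP S_def by (auto simp: doubleton_eq_iff)
      next
        assume "{z,z'} = {s,x}" then show ?thesis using xP S_def by (auto simp: doubleton_eq_iff)
      next
        assume eT: "{z,z'} \<in> T" and ne: "{z,z'} \<noteq> {s,s'}"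
        have "z \<noteq> s" using only[OF eT] ne s' by auto
        then have "z \<in> set P" using z S_def by simp
        then obtain k where k: "k < length P" "z = P!k" by (auto simp: in_set_conv_nth)
        have "k \<noteq> 0" using k P0 bBr z(2) by metis
        moreover have "k \<noteq> length P - 1" using k Plast rBr z(2) by metis
        ultimately have "\<not> (k = 0 \<or> k = length P - 1)" by simp
        then have kk: "0 < k" "k < length P - 1" using k by auto
        have zV: "z \<in> V" using eT TPow by auto
        have dz: "degree T z \<le> 2" using z(2) zV unfolding Br_def branches_def by auto
        have "{z,z'} = {P!(k-1), P!k} \<or> {z,z'} = {P!k, P!Suc k}"
          using degree_le2_cases[OF finT dz, of "{P!(k-1), P!k}" "{P!k, P!Suc k}" "{z,z'}"]
            interior_edges[OF kk] k eT by auto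
        moreover have "{P!(k-1), P!k} \<subseteq> set P" "{P!k, P!Suc k} \<subseteq> set P" using kk by auto
        ultimately show ?thesis using S_def by auto
      qed
    qed
    have degS: "z \<in> S \<Longrightarrow> degree T' z \<ge> 2" for z
    proof -
      assume "z \<in> S"
      show ?thesis
      proof (cases "z = s")
        case True then show ?thesis using D1 by simp
      next
        case False
        then have "z \<in> set P" using \<open>z \<in> S\<close> S_def by simp
        then have "z \<noteq> s'" "degree T z \<ge> 2" using s'P degP by auto
        then show ?thesis using D2[OF False] by simp
      qed
    qed
    have R2: "remset V T' \<subseteq> remset V T - {s}"
    proof
      fix w assume "w \<in> remset V T'"
      then obtain l y where l: "l \<in> leaves V T'" and y: "y \<in> Br"
        and Ry: "set (tree_path T' l y) \<inter> Br = {y}" and wR: "w \<in> set (tree_path T' l y) - {y}"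
        by (rule remsetE) (simp only: BrEq)
      define R where "R = tree_path T' l y"
      have lV: "l \<in> V" and degl: "degree T' l = 1" using l unfolding leaves_def by auto
      have yV: "y \<in> V" using y BrV by auto
      have Rp: "is_path T' R" "hd R = l" "last R = y" using tree_path_props[OF tr' lV yV] R_def by auto
      have Rne: "R \<noteq> []" and Rd: "distinct R" using Rp unfolding is_path_def by auto
      have RBr: "set R \<inter> Br = {y}" using Ry R_def by simp
      have lS: "l \<notin> S" using degS degl by fastforce
      have sR: "s \<notin> set R"
      proof
        assume "s \<in> set R"
        then obtain j where j: "j < length R" "R!j = s" by (auto simp: in_set_conv_nth)
        have ylast: "R!(length R - 1) = y" using Rp Rne by (simp add: last_conv_nth)
        have "j \<noteq> length R - 1" using j ylast sBr y by auto
        then have jl: "j < length R - 1" using j by simp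
        have "t \<le> j \<Longrightarrow> R!t \<notin> S" for t
        proof (induction t)
          case 0 then show ?case using lS Rp Rne by (simp add: hd_conv_nth)
        next
          case (Suc t)
          show ?case
          proof
            assume inS: "R!Suc t \<in> S"
            have "Suc t < length R - 1" using Suc.prems jl by simp
            then have "R!Suc t \<noteq> y" using ylast nth_eq_iff_index_eq[OF Rd, of "Suc t" "length R - 1"] by auto
            moreover have "R!Suc t \<in> set R" using \<open>Suc t < length R - 1\<close> by simp
            ultimately have "R!Suc t \<notin> Br" using RBr by auto
            moreover have "{R!Suc t, R!t} \<in> T'" using Rp(1) \<open>Suc t < length R - 1\<close>
              unfolding is_path_def by (auto simp: insert_commute)
            ultimately have "R!t \<in> S" using K[OF inS] by blast
            then show False using Suc.IH Suc.prems by simp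
          qed
        qed
        then have "R!j \<notin> S" by simp
        then show False using j S_def by simp
      qed
      have RT: "is_path T R"
      proof (rule is_path_sub[OF Rp(1)])
        fix k assume k: "Suc k < length R"
        have e: "{R!k, R!Suc k} \<in> T'" using Rp(1) k unfolding is_path_def by blast
        have "s \<notin> {R!k, R!Suc k}" using sR k by auto
        then show "{R!k, R!Suc k} \<in> T" using e unfolding T'_def T1_def by auto
      qed
      have ls: "l \<noteq> s" using degl D1 by auto
      have wRset: "w \<in> set R - {y}" using wR R_def by simp
      show "w \<in> remset V T - {s}"
      proof (cases "l = s'")
        case False
        then have "degree T l = 1" using D2[OF ls] degl by simp
        then have lL: "l \<in> leaves V T" using lV unfolding leaves_def by simp
        have "tree_path T l y = R" using tree_path_eq[OF tr RT Rp(2,3)] .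
        then have "w \<in> remset V T" using remsetI[OF lL, of y w] y RBr wRset Br_def by simp
        moreover have "w \<noteq> s" using wRset sR by auto
        ultimately show ?thesis by simp
      next
        case True
        have R'p: "is_path T (s # R)" using is_path_Cons[OF RT sR] Rp(2) True ss'T by simp
        have "tree_path T s y = s # R" using tree_path_eq[OF tr R'p] Rp Rne by simp
        moreover have "set (s # R) \<inter> Br = {y}" using RBr sBr by auto
        moreover have "w \<in> set (s # R) - {y}" using wRset by auto
        ultimately have "w \<in> remset V T" using remsetI[OF sL, of y w] y Br_def by simp
        moreover have "w \<noteq> s" using wRset sR by auto
        ultimately show ?thesis by simp
      qed
    qed
    have "r_stem V T \<subset> r_stem V T'"
    proof -
      have "r_stem V T \<subseteq> r_stem V T'" using R2 unfolding r_stem_remset by auto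
      moreover have "s \<in> r_stem V T'" "s \<notin> r_stem V T" using R1 R2 sV unfolding r_stem_remset by auto
      ultimately show ?thesis by blast
    qed
    then have "card (r_stem V T) < card (r_stem V T')"
      using finV unfolding r_stem_remset by (intro psubset_card_mono) auto
    then show False using C2bound by simp
  qed
qed


end
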